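(* Let $n,k\in\mathbb{N}$ with $n\le k$, and let $a_1,\ldots,a_n\ge 0$ be real numbers such that $r:=\sum_{j=1}^n a_j>0$. Consider the (possibly degenerate) ellipsoid $$\mathcal{E}=\Big\{x=(x_1,\ldots,x_n)^t\in\mathbb{R}^n \;\Big|\; \sum_{j=1}^n a_j x_j^2=1\Big\}.$$ Then there is a tight frame for $\mathbb{R}^n$ consisting of $k$ vectors $u_1,\ldots,u_k\in\mathcal{E}$.
   Context: A finite sequence $\{u_j\}$ in a Hilbert space $\mathcal{H}$ is a frame if there are constants $0<A\le B$ with $A\|x\|^2\le\sum_j|\langle x,u_j\rangle|^2\le B\|x\|^2$ for all $x\in\mathcal{H}$; it is a tight frame if one can take $A=B$ (the common value is the frame bound). *)

theory Defs
  imports "HOL-Analysis.Analysis"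
begin

definition is_frame :: "nat \<Rightarrow> (nat \<Rightarrow> 'a::real_inner) \<Rightarrow> bool" where
  "is_frame k u \<longleftrightarrow> (\<exists>A B. 0 < A \<and> A \<le> B \<and>
     (\<forall>x. A * (norm x)^2 \<le> (\<Sum>j<k. \<bar>inner x (u j)\<bar>^2) \<and>
          (\<Sum>j<k. \<bar>inner x (u j)\<bar>^2) \<le> B * (norm x)^2))"

definition is_tight_frame :: "nat \<Rightarrow> (nat \<Rightarrow> 'a::real_inner) \<Rightarrow> bool" where
  "is_tight_frame k u \<longleftrightarrow> (\<exists>A. 0 < A \<and>
     (\<forall>x. A * (norm x)^2 \<le> (\<Sum>j<k. \<bar>inner x (u j)\<bar>^2) \<and>
          (\<Sum>j<k. \<bar>inner x (u j)\<bar>^2) \<le> A * (norm x)^2))"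

definition ellipsoid :: "real^'n \<Rightarrow> (real^'n) set" where
  "ellipsoid a = {x. (\<Sum>j\<in>UNIV. a $ j * (x $ j)^2) = 1}"

end

theory Submission
  imports Defs
begin

definition ellQ :: "real^'n \<Rightarrow> real^'n \<Rightarrow> real" where
  "ellQ a w = (\<Sum>j\<in>UNIV. a $ j * (w $ j)^2)"

lemma ellQ_rot:
  fixes c s :: real
  assumes "c^2 + s^2 = 1"
  shows "ellQ a (c *\<^sub>R u + s *\<^sub>R v) + ellQ a ((-s) *\<^sub>R u + c *\<^sub>R v) = ellQ a u + ellQ a v"
proof -
  have "\<And>j. a $ j * (c * u $ j + s * v $ j)^2 + a $ j * (- s * u $ j + c * v $ j)^2
     = (c^2 + s^2) * (a $ j * (u $ j)^2 + a $ j * (v $ j)^2)"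
    by (simp add: algebra_simps power2_eq_square)
  then show ?thesis using assms unfolding ellQ_def
    by (simp add: sum.distrib[symmetric])
qed

lemma inner_rot:
  fixes c s :: real
  assumes "c^2 + s^2 = 1"
  shows "(inner x (c *\<^sub>R u + s *\<^sub>R v))^2 + (inner x ((-s) *\<^sub>R u + c *\<^sub>R v))^2
     = (inner x u)^2 + (inner x v)^2"
proof -
  have "(c * inner x u + s * inner x v)^2 + (- s * inner x u + c * inner x v)^2
     = (c^2 + s^2) * ((inner x u)^2 + (inner x v)^2)"
    by (simp add: algebra_simps power2_eq_square)
  then show ?thesis using assms by (simp add: inner_add_right inner_diff_right)
qed

lemma sum_pair_swap:
  fixes h h' :: "nat \<Rightarrow> real"
  assumes "finite A" "p \<in> A" "q \<in> A" "p \<noteq> q"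
    and "\<And>j. j \<noteq> p \<Longrightarrow> j \<noteq> q \<Longrightarrow> h' j = h j"
    and "h' p + h' q = h p + h q"
  shows "sum h' A = sum h A"
proof -
  have "sum h' A = h' p + h' q + sum h' (A - {p} - {q})"
    using assms by (simp add: sum.remove[of A p] sum.remove[of "A - {p}" q] algebra_simps)
  also have "sum h' (A - {p} - {q}) = sum h (A - {p} - {q})"
    using assms by (intro sum.cong) auto
  also have "h' p + h' q + sum h (A - {p} - {q}) = sum h A"
    using assms by (simp add: sum.remove[of A p] sum.remove[of "A - {p}" q] algebra_simps)
  finally show ?thesis .
qed

lemma main:
  fixes u :: "nat \<Rightarrow> real^'n" and a :: "real^'n"
  assumes "\<forall>x. (\<Sum>j<k. (inner x (u j))^2) = C * (norm x)^2"
    and "(\<Sum>j<k. ellQ a (u j)) = real k"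
  shows "\<exists>v. (\<forall>x. (\<Sum>j<k. (inner x (v j))^2) = C * (norm x)^2) \<and> (\<forall>j<k. ellQ a (v j) = 1)"
  using assms
proof (induction "card {j. j<k \<and> ellQ a (u j) \<noteq> 1}" arbitrary: u rule: less_induct)
  case less
  show ?case
  proof (cases "\<forall>j<k. ellQ a (u j) = 1")
    case True
    then show ?thesis using less.prems by blast
  next
    case False
    then obtain j0 where j0: "j0 < k" "ellQ a (u j0) \<noteq> 1" by auto
    have "\<exists>p q. p < k \<and> q < k \<and> ellQ a (u q) < 1 \<and> 1 < ellQ a (u p)"
    proof (rule ccontr)
      assume H: "\<not> ?thesis"
      show False
      proof (cases "ellQ a (u j0) < 1")
        case True
        then have "\<forall>p<k. ellQ a (u p) \<le> 1" using H j0 by force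
        then have "(\<Sum>j\<in>{..<k} - {j0}. ellQ a (u j)) \<le> (\<Sum>j\<in>{..<k} - {j0}. 1)"
          by (intro sum_mono) auto
        moreover have "(\<Sum>j<k. ellQ a (u j)) = ellQ a (u j0) + (\<Sum>j\<in>{..<k} - {j0}. ellQ a (u j))"
          using j0 by (simp add: sum.remove)
        ultimately show False using True less.prems(2) j0 by simp
      next
        case False
        then have g: "1 < ellQ a (u j0)" using j0 by simp
        then have "\<forall>q<k. 1 \<le> ellQ a (u q)" using H j0 by force
        then have "(\<Sum>j\<in>{..<k} - {j0}. 1) \<le> (\<Sum>j\<in>{..<k} - {j0}. ellQ a (u j))"
          by (intro sum_mono) auto
        moreover have "(\<Sum>j<k. ellQ a (u j)) = ellQ a (u j0) + (\<Sum>j\<in>{..<k} - {j0}. ellQ a (u j))"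
          using j0 by (simp add: sum.remove)
        ultimately show False using g less.prems(2) j0 by simp
      qed
    qed
    then obtain p q where pq: "p < k" "q < k" "ellQ a (u q) < 1" "1 < ellQ a (u p)" by blast
    then have pne: "p \<noteq> q" by auto
    define f where "f = (\<lambda>t. ellQ a (cos t *\<^sub>R u p + sin t *\<^sub>R u q))"
    have cont: "isCont f t" for t
      unfolding f_def ellQ_def by (intro continuous_intros)
    have "\<exists>t\<ge>0. t \<le> pi/2 \<and> f t = 1"
      proof (rule IVT2)
      show "f (pi/2) \<le> 1" using pq by (simp add: f_def)
      show "1 \<le> f 0" using pq by (simp add: f_def)
      show "0 \<le> pi/2" by simp
      show "\<forall>x. 0 \<le> x \<and> x \<le> pi/2 \<longrightarrow> isCont f x" using cont by blast
    qed
    then obtain t where t: "f t = 1" by blast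
    have cs: "(cos t)^2 + (sin t)^2 = 1" by simp
    define v where "v = u(p := cos t *\<^sub>R u p + sin t *\<^sub>R u q, q := (- sin t) *\<^sub>R u p + cos t *\<^sub>R u q)"
    have vp: "v p = cos t *\<^sub>R u p + sin t *\<^sub>R u q" and vq: "v q = (- sin t) *\<^sub>R u p + cos t *\<^sub>R u q"
      using pne by (auto simp: v_def)
    have voth: "\<And>j. j \<noteq> p \<Longrightarrow> j \<noteq> q \<Longrightarrow> v j = u j" by (simp add: v_def)
    have fr: "\<forall>x. (\<Sum>j<k. (inner x (v j))^2) = C * (norm x)^2"
    proof
      fix x
      have "(\<Sum>j<k. (inner x (v j))^2) = (\<Sum>j<k. (inner x (u j))^2)"
        proof (rule sum_pair_swap[of "{..<k}" p q])
          show "finite {..<k}" by simp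
          show "p \<in> {..<k}" "q \<in> {..<k}" "p \<noteq> q" using pq pne by auto
        next
          fix j :: nat assume "j \<noteq> p" "j \<noteq> q"
          then show "(\<lambda>w. (inner x w)^2) (v j) = (\<lambda>w. (inner x w)^2) (u j)" using voth by simp
        next
          show "(\<lambda>w. (inner x w)^2) (v p) + (\<lambda>w. (inner x w)^2) (v q) = (\<lambda>w. (inner x w)^2) (u p) + (\<lambda>w. (inner x w)^2) (u q)"
            unfolding vp vq by (rule inner_rot[OF cs])
        qed
      then show "(\<Sum>j<k. (inner x (v j))^2) = C * (norm x)^2" using less.prems(1) by simp
    qed
    have qs: "(\<Sum>j<k. ellQ a (v j)) = real k"
    proof -
      have "(\<Sum>j<k. ellQ a (v j)) = (\<Sum>j<k. ellQ a (u j))"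
        proof (rule sum_pair_swap[of "{..<k}" p q])
          show "finite {..<k}" by simp
          show "p \<in> {..<k}" "q \<in> {..<k}" "p \<noteq> q" using pq pne by auto
        next
          fix j :: nat assume "j \<noteq> p" "j \<noteq> q"
          then show "ellQ a (v j) = ellQ a (u j)" using voth by simp
        next
          show "ellQ a (v p) + ellQ a (v q) = ellQ a (u p) + ellQ a (u q)"
            unfolding vp vq by (rule ellQ_rot[OF cs])
        qed
      then show ?thesis using less.prems(2) by simp
    qed
    have sub: "{j. j<k \<and> ellQ a (v j) \<noteq> 1} \<subseteq> {j. j<k \<and> ellQ a (u j) \<noteq> 1} - {p}"
    proof (intro subsetI)
      fix j assume j: "j \<in> {j. j<k \<and> ellQ a (v j) \<noteq> 1}"
      have "j \<noteq> p"
      proof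
        assume "j = p"
        then have "ellQ a (v j) = 1" using t vp unfolding f_def by simp
        then show False using j by simp
      qed
      moreover have "ellQ a (u j) \<noteq> 1"
      proof (cases "j = q")
        case True then show ?thesis using pq by simp
      next
        case False
        then have "v j = u j" using voth \<open>j \<noteq> p\<close> by blast
        then show ?thesis using j by simp
      qed
      ultimately show "j \<in> {j. j<k \<and> ellQ a (u j) \<noteq> 1} - {p}" using j by auto
    qed
    have "card {j. j<k \<and> ellQ a (v j) \<noteq> 1} < card {j. j<k \<and> ellQ a (u j) \<noteq> 1}"
    proof -
      have "card {j. j<k \<and> ellQ a (v j) \<noteq> 1} \<le> card ({j. j<k \<and> ellQ a (u j) \<noteq> 1} - {p})"
        by (rule card_mono[OF _ sub]) simp
      also have "\<dots> < card {j. j<k \<and> ellQ a (u j) \<noteq> 1}"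
      proof (rule psubset_card_mono)
        show "finite {j. j<k \<and> ellQ a (u j) \<noteq> 1}" by simp
        have "p \<in> {j. j<k \<and> ellQ a (u j) \<noteq> 1}" using pq by simp
        then show "{j. j<k \<and> ellQ a (u j) \<noteq> 1} - {p} \<subset> {j. j<k \<and> ellQ a (u j) \<noteq> 1}" by blast
      qed
      finally show ?thesis .
    qed
    from less.hyps[OF this fr qs] show ?thesis .
  qed
qed

theorem theorem1:
  fixes a :: "real^'n" and k :: nat
  assumes "CARD('n) \<le> k"
    and "\<forall>j. a $ j \<ge> 0"
    and "(\<Sum>j\<in>UNIV. a $ j) > 0"
  shows "\<exists>u :: nat \<Rightarrow> real^'n. (\<forall>j<k. u j \<in> ellipsoid a) \<and> is_tight_frame k u"
proof -
  define r where "r = (\<Sum>j\<in>UNIV. a $ j)"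
  define C where "C = real k / r"
  have r0: "r > 0" using assms(3) r_def by simp
  have k0: "k > 0" proof -
    have "0 < CARD('n)" by simp
    then show ?thesis using assms(1) by linarith
  qed
  have C0: "C > 0" using r0 k0 by (simp add: C_def)
  obtain e where e: "bij_betw e {0..<CARD('n)} (UNIV :: 'n set)"
    using ex_bij_betw_nat_finite[of "UNIV :: 'n set"] by auto
  have ee: "bij_betw e {..<CARD('n)} (UNIV :: 'n set)" using e by (simp add: lessThan_atLeast0)
  define u where "u = (\<lambda>j. if j < CARD('n) then sqrt C *\<^sub>R (axis (e j) (1::real) :: real^'n) else 0)"
  have restr: "(\<Sum>j<k. (if j < CARD('n) then g j else 0)) = (\<Sum>j<CARD('n). g j)" for g :: "nat \<Rightarrow> real"
  proof -
    have "(\<Sum>j<k. (if j < CARD('n) then g j else 0)) = (\<Sum>j\<in>{..<k} \<inter> {j. j < CARD('n)}. g j)"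
      by (simp add: sum.inter_restrict)
    also have "{..<k} \<inter> {j. j < CARD('n)} = {..<CARD('n)}" using assms(1) by auto
    finally show ?thesis .
  qed
  have fr: "\<forall>x. (\<Sum>j<k. (inner x (u j))^2) = C * (norm x)^2"
  proof
    fix x :: "real^'n"
    have "(\<Sum>j<k. (inner x (u j))^2) = (\<Sum>j<k. (if j < CARD('n) then C * (x $ e j)^2 else 0))"
      using C0 by (intro sum.cong) (auto simp: u_def inner_axis power_mult_distrib)
    also have "\<dots> = (\<Sum>j<CARD('n). C * (x $ e j)^2)" by (rule restr)
    also have "\<dots> = (\<Sum>i\<in>UNIV. C * (x $ i)^2)"
      by (rule sum.reindex_bij_betw[OF ee])
    also have "\<dots> = C * (norm x)^2"
    proof -
      have "(norm x)^2 = (\<Sum>i\<in>UNIV. (x $ i)^2)"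
        unfolding dot_square_norm[symmetric] inner_vec_def by (simp add: power2_eq_square)
      then show ?thesis by (simp add: sum_distrib_left)
    qed
    finally show "(\<Sum>j<k. (inner x (u j))^2) = C * (norm x)^2" .
  qed
  have qs: "(\<Sum>j<k. ellQ a (u j)) = real k"
  proof -
    have ax: "ellQ a (axis i 1) = a $ i" for i :: 'n
    proof -
      have "ellQ a (axis i 1) = (\<Sum>j\<in>UNIV. if j = i then a $ i else 0)"
        unfolding ellQ_def by (intro sum.cong) (auto simp: axis_def)
      then show ?thesis by simp
    qed
    have "(\<Sum>j<k. ellQ a (u j)) = (\<Sum>j<k. (if j < CARD('n) then C * a $ e j else 0))"
    proof (intro sum.cong refl)
      fix j assume "j \<in> {..<k}"
      show "ellQ a (u j) = (if j < CARD('n) then C * a $ e j else 0)"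
      proof (cases "j < CARD('n)")
        case True
        have "ellQ a (sqrt C *\<^sub>R axis (e j) 1) = C * ellQ a (axis (e j) 1)"
          unfolding ellQ_def using C0
          by (simp add: sum_distrib_left power_mult_distrib algebra_simps)
        then show ?thesis using True ax by (simp add: u_def)
      next
        case False
        then show ?thesis by (simp add: u_def ellQ_def)
      qed
    qed
    also have "\<dots> = (\<Sum>j<CARD('n). C * a $ e j)" by (rule restr)
    also have "\<dots> = (\<Sum>i\<in>UNIV. C * a $ i)"
      by (rule sum.reindex_bij_betw[OF ee])
    also have "\<dots> = C * r" by (simp add: sum_distrib_left r_def)
    also have "\<dots> = real k" using r0 by (simp add: C_def)
    finally show ?thesis .
  qed
  obtain v where v: "\<forall>x. (\<Sum>j<k. (inner x (v j))^2) = C * (norm x)^2" "\<forall>j<k. ellQ a (v j) = 1"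
    using main[OF fr qs] by blast
  show ?thesis
  proof (intro exI conjI)
    show "\<forall>j<k. v j \<in> ellipsoid a" using v(2) by (simp add: ellipsoid_def ellQ_def)
    show "is_tight_frame k v" unfolding is_tight_frame_def
      using C0 v(1) by (intro exI[of _ C]) simp
  qed
qed

end
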